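(* Let $n,a,h,t$ be positive integers with $h\le n$ and $a\le t\le ah$. The code $$\mathcal C(n;t)=\Big\{\mathbf x\in\mathbb Z^n:\ \sum_{i=1}^n x_i\equiv 0 \pmod{t+1}\Big\}$$ is an $(a,h,t)$-AED code in $\mathbb Z^n$, its density equals $\mu(\mathcal C(n;t))=\frac{1}{t+1}$, and it is optimal: no $(a,h,t)$-AED code in $\mathbb Z^n$ has upper density larger than $\frac{1}{t+1}$.
   Context: Channel over the alphabet $\mathbb Z$: an input $\mathbf x=(x_1,\dots,x_n)\in\mathbb Z^n$ can produce any output $\mathbf y\in\mathbb Z^n$ satisfying (1) $0\le y_i-x_i\le a$ for all $i$; (2) $\sum_{i=1}^n \mathbb 1_{\{y_i\ne x_i\}}\le h$; (3) $\sum_{i=1}^n (y_i-x_i)\le t$. $\mathrm{Out}(\mathbf x)$ denotes the set of all such outputs $\mathbf y$. A code $\mathcal C\subseteq\mathbb Z^n$ is an $(a,h,t)$-AED code if for all $\mathbf x\in\mathcal C$ and all $\mathbf y\in\mathrm{Out}(\mathbf x)$ with $\mathbf y\neq\mathbf x$, we have $\mathbf y\notin\mathcal C$. The density of $\mathcal C\subseteq\mathbb Z^n$ is $\mu(\mathcal C)=\lim_{k\to\infty}\frac{|\mathcal C\cap\{-k,\dots,k\}^n|}{(2k+1)^n}$ when the limit exists; the upper density $\overline{\mu}(\mathcal C)$ is defined with $\limsup$ in place of $\lim$. *)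

theory Defs
  imports "HOL-Analysis.Analysis" "HOL-Library.Liminf_Limsup"
begin

text \<open>Words of length n over the alphabet of integers are represented as integer lists
  of length n; a code in Z^n is a set of such lists.\<close>

definition words :: "nat \<Rightarrow> int list set" where
  "words n = {x. length x = n}"

definition Out :: "int \<Rightarrow> nat \<Rightarrow> int \<Rightarrow> int list \<Rightarrow> int list set" where
  "Out a h t x = {y. length y = length x
      \<and> (\<forall>i<length x. 0 \<le> y ! i - x ! i \<and> y ! i - x ! i \<le> a)
      \<and> card {i. i < length x \<and> y ! i \<noteq> x ! i} \<le> h
      \<and> (\<Sum>i<length x. y ! i - x ! i) \<le> t}"

definition AED_code :: "nat \<Rightarrow> int \<Rightarrow> nat \<Rightarrow> int \<Rightarrow> int list set \<Rightarrow> bool" where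
  "AED_code n a h t C \<longleftrightarrow> C \<subseteq> words n \<and>
     (\<forall>x\<in>C. \<forall>y\<in>Out a h t x. y \<noteq> x \<longrightarrow> y \<notin> C)"

definition cube :: "nat \<Rightarrow> nat \<Rightarrow> int list set" where
  "cube n k = {x \<in> words n. \<forall>i<n. - int k \<le> x ! i \<and> x ! i \<le> int k}"

definition density_ratio :: "nat \<Rightarrow> int list set \<Rightarrow> nat \<Rightarrow> real" where
  "density_ratio n C k = real (card (C \<inter> cube n k)) / real (2 * k + 1) ^ n"

definition has_density :: "nat \<Rightarrow> int list set \<Rightarrow> real \<Rightarrow> bool" where
  "has_density n C d \<longleftrightarrow> (density_ratio n C \<longlongrightarrow> d) sequentially"

definition upper_density :: "nat \<Rightarrow> int list set \<Rightarrow> ereal" where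
  "upper_density n C = limsup (\<lambda>k. ereal (density_ratio n C k))"

definition sum_code :: "nat \<Rightarrow> int \<Rightarrow> int list set" where
  "sum_code n t = {x \<in> words n. (\<Sum>i<n. x ! i) mod (t + 1) = 0}"

end

theory Submission
  imports Defs
begin

lemma cube_eq: "cube n k = {xs. set xs \<subseteq> {- int k..int k} \<and> length xs = n}"
  unfolding cube_def words_def by (auto simp: subset_iff in_set_conv_nth)

lemma finite_cube: "finite (cube n k)"
  unfolding cube_eq by (rule finite_lists_length_eq) simp

lemma card_cube: "card (cube n k) = (2*k+1)^n"
proof -
  have "nat (2 * int k + 1) = Suc (2*k)" by (simp add: nat_eq_iff)
  thus ?thesis unfolding cube_eq by (simp add: card_lists_length_eq)
qed

lemma uniq_res:
  fixes z1 z2 u c :: int and m :: nat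
  assumes "u \<le> z1" "z1 < u + int m" "u \<le> z2" "z2 < u + int m"
    "(z1 + c) mod int m = 0" "(z2 + c) mod int m = 0"
  shows "z1 = z2"
proof (rule ccontr)
  assume ne: "z1 \<noteq> z2"
  have d1: "int m dvd z1 + c" using assms(5) by (rule mod_0_imp_dvd)
  have d2: "int m dvd z2 + c" using assms(6) by (rule mod_0_imp_dvd)
  have "int m dvd (z1 + c) - (z2 + c)" using dvd_diff[OF d1 d2] .
  hence "int m dvd (z1 - z2)" by simp
  hence "\<bar>int m\<bar> \<le> \<bar>z1 - z2\<bar>" using ne by (intro dvd_imp_le_int) auto
  thus False using assms(1-4) by linarith
qed

lemma res_count:
  fixes u c :: int and m L :: nat
  assumes "m > 0"
  shows "L div m \<le> card {z \<in> {u..<u + int L}. (z + c) mod int m = 0}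
       \<and> card {z \<in> {u..<u + int L}. (z + c) mod int m = 0} \<le> L div m + 1"
  using assms
proof (induction L arbitrary: u rule: less_induct)
  case (less L)
  show ?case
  proof (cases "L < m")
    case True
    have "card {z \<in> {u..<u + int L}. (z + c) mod int m = 0} \<le> Suc 0"
    proof (subst card_le_Suc0_iff_eq)
      show "finite {z \<in> {u..<u + int L}. (z + c) mod int m = 0}" by (rule finite_subset[of _ "{u..<u+int L}"]) auto
      show "\<forall>a1\<in>{z \<in> {u..<u + int L}. (z + c) mod int m = 0}. \<forall>a2\<in>{z \<in> {u..<u + int L}. (z + c) mod int m = 0}. a1 = a2"
        using True by (auto intro: uniq_res[of u _ m _ c])
    qed
    thus ?thesis using True by simp
  next
    case False
    define z0 where "z0 = u + (-(u+c)) mod int m"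
    have z0a: "u \<le> z0" "z0 < u + int m"
        using less.prems unfolding z0_def by simp_all
    have A1: "{z \<in> {u..<u + int m}. (z + c) mod int m = 0} = {z0}"
    proof -
      have "(z0 + c) mod int m = ((u + c) + (-(u+c)) mod int m) mod int m"
        unfolding z0_def by (simp add: algebra_simps)
      also have "\<dots> = ((u + c) + (-(u+c))) mod int m" by (rule mod_add_right_eq)
      finally have z0b: "(z0 + c) mod int m = 0" by simp
      note z0 = z0a z0b
      show ?thesis using z0 by (auto intro: uniq_res[of u _ m _ c])
    qed
    have split: "{z \<in> {u..<u + int L}. (z + c) mod int m = 0}
       = {z \<in> {u..<u + int m}. (z + c) mod int m = 0} \<union> {z \<in> {u + int m..<(u + int m) + int (L - m)}. (z + c) mod int m = 0}"
      using False by auto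
    have c: "card {z \<in> {u..<u + int L}. (z + c) mod int m = 0}
       = 1 + card {z \<in> {u + int m..<(u + int m) + int (L - m)}. (z + c) mod int m = 0}"
    proof -
      have fin: "finite {z \<in> {u + int m..<(u + int m) + int (L - m)}. (z + c) mod int m = 0}"
        by (rule finite_subset[of _ "{u + int m..<(u + int m) + int (L - m)}"]) auto
      show ?thesis unfolding split A1 using fin z0a by (subst card_Un_disjoint) auto
    qed
    note IH = less.IH[of "L - m" "u + int m"]
    have "(L - m) div m + 1 = L div m" using False less.prems
      by (simp add: le_div_geq)
    thus ?thesis using IH c False less.prems by auto
  qed
qed


lemma sum_cons: "(\<Sum>i<Suc n. (z # xs) ! i) = z + (\<Sum>i<n. xs ! i)"
  unfolding sum.lessThan_Suc_shift by simp

lemma sumcode_split: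
  "cube (Suc n) k \<inter> sum_code (Suc n) t = (\<lambda>(xs,z). z # xs) ` Sigma (cube n k)
     (\<lambda>xs. {z \<in> {-int k..int k}. (z + (\<Sum>i<n. xs!i)) mod (t+1) = 0})"
proof (intro equalityI subsetI)
  fix x assume x: "x \<in> cube (Suc n) k \<inter> sum_code (Suc n) t"
  then obtain z xs where xz: "x = z # xs" by (cases x) (auto simp: cube_def words_def)
  have "xs \<in> cube n k" using x unfolding xz cube_def words_def
    by (auto simp: All_less_Suc2)
  moreover have "z \<in> {-int k..int k}" using x unfolding xz cube_def words_def by force
  moreover have "(z + (\<Sum>i<n. xs!i)) mod (t+1) = 0" using x unfolding xz sum_code_def words_def
    by (simp add: sum_cons del: sum.lessThan_Suc)
  ultimately show "x \<in> (\<lambda>(xs,z). z # xs) ` Sigma (cube n k)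
     (\<lambda>xs. {z \<in> {-int k..int k}. (z + (\<Sum>i<n. xs!i)) mod (t+1) = 0})"
    unfolding xz by (intro rev_image_eqI[of "(xs,z)"]) auto
next
  fix x assume "x \<in> (\<lambda>(xs,z). z # xs) ` Sigma (cube n k)
     (\<lambda>xs. {z \<in> {-int k..int k}. (z + (\<Sum>i<n. xs!i)) mod (t+1) = 0})"
  then obtain xs z where xz: "x = z # xs" and xs: "xs \<in> cube n k" and z: "z \<in> {-int k..int k}"
    and r: "(z + (\<Sum>i<n. xs!i)) mod (t+1) = 0" by auto
  show "x \<in> cube (Suc n) k \<inter> sum_code (Suc n) t"
    using xs z r unfolding xz cube_def words_def sum_code_def
    by (auto simp: All_less_Suc2 sum_cons simp del: sum.lessThan_Suc)
qed

lemma card_sumcode: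
  "card (cube (Suc n) k \<inter> sum_code (Suc n) t) = (\<Sum>xs\<in>cube n k.
     card {z \<in> {-int k..int k}. (z + (\<Sum>i<n. xs!i)) mod (t+1) = 0})"
proof -
  have "inj_on (\<lambda>(xs,z). z # xs) (Sigma (cube n k)
     (\<lambda>xs. {z \<in> {-int k..int k}. (z + (\<Sum>i<n. xs!i)) mod (t+1) = 0}))"
    by (auto simp: inj_on_def)
  hence "card (cube (Suc n) k \<inter> sum_code (Suc n) t) = card (Sigma (cube n k)
     (\<lambda>xs. {z \<in> {-int k..int k}. (z + (\<Sum>i<n. xs!i)) mod (t+1) = 0}))"
    unfolding sumcode_split by (rule card_image)
  also have "\<dots> = (\<Sum>xs\<in>cube n k.
     card {z \<in> {-int k..int k}. (z + (\<Sum>i<n. xs!i)) mod (t+1) = 0})"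
    by (rule card_SigmaI) (auto simp: finite_cube intro: finite_subset[of _ "{-int k..int k}"])
  finally show ?thesis .
qed

lemma card_sumcode_bounds:
  assumes "t > 0"
  shows "(2*k+1)^n * ((2*k+1) div nat (t+1)) \<le> card (cube (Suc n) k \<inter> sum_code (Suc n) t)
    \<and> card (cube (Suc n) k \<inter> sum_code (Suc n) t) \<le> (2*k+1)^n * ((2*k+1) div nat (t+1) + 1)"
proof -
  define m where "m = nat (t+1)"
  have m: "m > 0" "int m = t + 1" using assms unfolding m_def by auto
  have iv: "{-int k..int k} = {-int k..<-int k + int (2*k+1)}" by auto
  have b: "(2*k+1) div m \<le> card {z \<in> {-int k..int k}. (z + (\<Sum>i<n. xs!i)) mod (t+1) = 0}
     \<and> card {z \<in> {-int k..int k}. (z + (\<Sum>i<n. xs!i)) mod (t+1) = 0} \<le> (2*k+1) div m + 1" for xs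
    unfolding iv m(2)[symmetric] by (rule res_count[OF m(1)])
  define Z where "Z = (\<lambda>xs. card {z \<in> {-int k..int k}. (z + (\<Sum>i<n. xs!i)) mod (t+1) = 0})"
  have "card (cube n k) * ((2*k+1) div m) \<le> card (cube (Suc n) k \<inter> sum_code (Suc n) t)"
    unfolding card_sumcode Z_def[symmetric]
    using sum_bounded_below[of "cube n k" "(2*k+1) div m" Z] b unfolding Z_def by simp
  moreover have "card (cube (Suc n) k \<inter> sum_code (Suc n) t) \<le> card (cube n k) * ((2*k+1) div m + 1)"
    unfolding card_sumcode Z_def[symmetric]
    using sum_bounded_above[of "cube n k" Z "(2*k+1) div m + 1"] b unfolding Z_def by simp
  ultimately show ?thesis unfolding card_cube m_def by simp
qed


lemma aux1: fixes M L q :: real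
  assumes "M > 0" "L > 0" "L \<le> M*q + M" shows "1/M - 1/L \<le> q/L"
proof -
  have "(1/M - 1/L) * (M*L) = L - M" using assms by (simp add: field_simps)
  also have "\<dots> \<le> q/L * (M*L)" using assms by (simp add: field_simps)
  finally show ?thesis by (rule mult_right_le_imp_le) (use assms in simp)
qed

lemma aux2: fixes M L q :: real
  assumes "M > 0" "L > 0" "M*q \<le> L" shows "(q+1)/L \<le> 1/M + 1/L"
proof -
  have "(q+1)/L * (M*L) = M*q + M" using assms by (simp add: field_simps)
  also have "\<dots> \<le> (1/M + 1/L) * (M*L)" using assms by (simp add: field_simps)
  finally show ?thesis by (rule mult_right_le_imp_le) (use assms in simp)
qed

lemma ratio_bounds:
  assumes "t > 0"
  shows "1 / real_of_int (t+1) - 1 / real (2*k+1) \<le> density_ratio (Suc n) (sum_code (Suc n) t) k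
    \<and> density_ratio (Suc n) (sum_code (Suc n) t) k \<le> 1 / real_of_int (t+1) + 1 / real (2*k+1)"
proof -
  define m where "m = nat (t+1)"
  define L where "L = 2*k+1"
  define q where "q = L div m"
  define c where "c = card (cube (Suc n) k \<inter> sum_code (Suc n) t)"
  have m: "m > 0" "real m = real_of_int (t+1)" using assms unfolding m_def by auto
  have L: "L > 0" unfolding L_def by simp
  have cb: "L^n * q \<le> c" "c \<le> L^n * (q + 1)"
    using card_sumcode_bounds[OF assms, of k n] unfolding c_def q_def L_def m_def by auto
  have Lq: "L = m * q + L mod m" unfolding q_def by simp
  have "L mod m < m" using m by simp
  hence "real (L mod m) < real m" by (simp only: of_nat_less_iff)
  moreover have "real L = real m * real q + real (L mod m)"
    using arg_cong[OF Lq, of real] by simp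
  ultimately have Lq1: "real L \<le> real m * real q + real m" "real m * real q \<le> real L"
    by linarith+
  have r: "density_ratio (Suc n) (sum_code (Suc n) t) k = real c / real L ^ Suc n"
    unfolding density_ratio_def c_def L_def by (simp add: Int_commute)
  have pos: "real L ^ n > 0" using L by simp
  have c1: "real L ^ n * real q \<le> real c" "real c \<le> real L ^ n * (real q + 1)"
  proof -
    have "real (L^n * q) \<le> real c" "real c \<le> real (L ^ n * (q + 1))"
      using cb by (simp_all only: of_nat_le_iff)
    thus "real L ^ n * real q \<le> real c" "real c \<le> real L ^ n * (real q + 1)" by (simp_all add: algebra_simps)
  qed
  have "real c / real L ^ Suc n \<ge> real q / real L"
    using c1 pos L by (simp add: field_simps)
  moreover have "real q / real L \<ge> 1 / real m - 1 / real L"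
    using Lq1 m(1) L by (intro aux1) auto
  moreover have "real c / real L ^ Suc n \<le> (real q + 1) / real L"
    using c1 pos L by (simp add: field_simps)
  moreover have "(real q + 1) / real L \<le> 1 / real m + 1 / real L"
    using Lq1 m(1) L by (intro aux2) auto
  ultimately show ?thesis unfolding r m(2)[symmetric] L_def by linarith
qed


lemma sumcode_AED:
  assumes "t > 0"
  shows "AED_code n a h t (sum_code n t)"
  unfolding AED_code_def
proof (intro conjI ballI impI)
  show "sum_code n t \<subseteq> words n" unfolding sum_code_def by auto
  fix x y assume x: "x \<in> sum_code n t" and y: "y \<in> Out a h t x" and ne: "y \<noteq> x"
  have lx: "length x = n" using x by (simp add: sum_code_def words_def)
  have ly: "length y = n" using y lx by (simp add: Out_def)
  have nn: "\<forall>i<n. 0 \<le> y!i - x!i" and st: "(\<Sum>i<n. y!i - x!i) \<le> t"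
    using y lx by (auto simp: Out_def)
  define d where "d = (\<Sum>i<n. y!i - x!i)"
  have d0: "d \<ge> 0" unfolding d_def using nn by (intro sum_nonneg) auto
  have "d \<noteq> 0"
  proof
    assume "d = 0"
    hence "\<forall>i\<in>{..<n}. y!i - x!i = 0" unfolding d_def
      using sum_nonneg_eq_0_iff[of "{..<n}" "\<lambda>i. y!i - x!i"] nn by auto
    hence "y = x" using lx ly by (intro nth_equalityI) auto
    thus False using ne by simp
  qed
  hence dpos: "0 < d" "d < t + 1" using d0 st unfolding d_def[symmetric] by linarith+
  have sy: "(\<Sum>i<n. y!i) = (\<Sum>i<n. x!i) + d" unfolding d_def by (simp add: sum_subtractf)
  have "(\<Sum>i<n. y!i) mod (t+1) = ((\<Sum>i<n. x!i) mod (t+1) + d) mod (t+1)"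
    unfolding sy by (simp add: mod_add_left_eq)
  also have "\<dots> = d mod (t+1)" using x by (simp add: sum_code_def)
  also have "\<dots> = d" using dpos by (intro mod_pos_pos_trivial) auto
  finally have "(\<Sum>i<n. y!i) mod (t+1) \<noteq> 0" using dpos by simp
  thus "y \<notin> sum_code n t" by (simp add: sum_code_def)
qed

definition sv :: "int \<Rightarrow> int \<Rightarrow> nat \<Rightarrow> int" where
  "sv a j c = max 0 (min a (j - int c * a))"

definition tr :: "int \<Rightarrow> int list \<Rightarrow> int \<Rightarrow> int list" where
  "tr a x j = map (\<lambda>c. x!c + sv a j c) [0..<length x]"

lemma sv_sum: "a > 0 \<Longrightarrow> j \<ge> 0 \<Longrightarrow> (\<Sum>c<n. sv a j c) = min j (int n * a)"
proof (induction n)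
  case 0 thus ?case by simp
next
  case (Suc n)
  have "(\<Sum>c<Suc n. sv a j c) = min j (int n * a) + max 0 (min a (j - int n * a))"
    using Suc by (simp add: sv_def)
  also have "\<dots> = min j (int n * a + a)" using Suc.prems by (auto simp: min_def max_def)
  finally show ?case by (simp add: algebra_simps)
qed

lemma out_lemma:
  assumes a: "a > 0" and th: "t \<le> a * int h" and hn: "h \<le> n"
    and ij: "0 \<le> i" "i < j" "j \<le> t"
    and lx: "length x = n" "length x' = n"
    and e: "\<forall>c<n. x!c + sv a i c = x'!c + sv a j c"
  shows "x \<in> Out a h t x'"
proof -
  have diff: "x!c - x'!c = sv a j c - sv a i c" if "c < n" for c using e that by force
  have "\<forall>c<n. 0 \<le> x!c - x'!c \<and> x!c - x'!c \<le> a"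
  proof (intro allI impI)
    fix c assume "c < n"
    show "0 \<le> x!c - x'!c \<and> x!c - x'!c \<le> a"
      unfolding diff[OF \<open>c<n\<close>] sv_def using ij a by linarith
  qed
  moreover have "card {c. c < n \<and> x!c \<noteq> x'!c} \<le> h"
  proof -
    have "{c. c < n \<and> x!c \<noteq> x'!c} \<subseteq> {..<h}"
    proof
      fix c assume c: "c \<in> {c. c < n \<and> x!c \<noteq> x'!c}"
      show "c \<in> {..<h}"
      proof (rule ccontr)
        assume "c \<notin> {..<h}"
        hence "int h * a \<le> int c * a" using a by (intro mult_right_mono) auto
        hence "sv a j c = 0" "sv a i c = 0" using th ij unfolding sv_def by (simp_all add: algebra_simps)
        thus False using c diff[of c] by simp
      qed
    qed
    thus ?thesis using card_mono[of "{..<h}"] by fastforce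
  qed
  moreover have "(\<Sum>c<n. x!c - x'!c) \<le> t"
  proof -
    have "(\<Sum>c<n. x!c - x'!c) = (\<Sum>c<n. sv a j c - sv a i c)" using diff by simp
    also have "\<dots> = min j (int n * a) - min i (int n * a)"
      using sv_sum[of a j n] sv_sum[of a i n] a ij by (simp add: sum_subtractf)
    also have "\<dots> = j - i"
    proof -
      have "int h * a \<le> int n * a" using hn a by (intro mult_right_mono) auto
      thus ?thesis using th ij by (simp add: algebra_simps)
    qed
    finally show ?thesis using ij by simp
  qed
  ultimately show ?thesis unfolding Out_def using lx by auto
qed

lemma noclash:
  assumes aed: "AED_code n a h t C" and a: "a > 0" and th: "t \<le> a * int h" and hn: "h \<le> n"
    and xC: "x \<in> C" "x' \<in> C"
    and ij: "0 \<le> i" "i < j" "j \<le> t"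
    and lx: "length x = n" "length x' = n"
    and e: "\<forall>c<n. x!c + sv a i c = x'!c + sv a j c"
  shows False
proof (cases "x = x'")
  case True
  hence "\<forall>c<n. sv a i c = sv a j c" using e by simp
  hence "(\<Sum>c<n. sv a i c) = (\<Sum>c<n. sv a j c)" by simp
  hence "min i (int n * a) = min j (int n * a)" using sv_sum[of a i n] sv_sum[of a j n] a ij by simp
  moreover have "int h * a \<le> int n * a" using hn a by (intro mult_right_mono) auto
  ultimately show False using th ij by (simp add: algebra_simps min_def split: if_splits)
next
  case False
  have "x \<in> Out a h t x'" by (rule out_lemma[OF a th hn ij lx e])
  thus False using aed xC False unfolding AED_code_def by blast
qed

lemma tr_length[simp]: "length (tr a x j) = length x" by (simp add: tr_def)
lemma tr_nth[simp]: "c < length x \<Longrightarrow> tr a x j ! c = x!c + sv a j c" by (simp add: tr_def)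

lemma upper_card:
  assumes aed: "AED_code n a h t C" and a: "a > 0" and th: "t \<le> a * int h" and hn: "h \<le> n"
    and at: "a \<le> t"
  shows "card (C \<inter> cube n k) * (nat t + 1) \<le> (2*(k + nat t)+1)^n"
proof -
  define A where "A = C \<inter> cube n k"
  define S where "S = A \<times> {0..t}"
  have finA: "finite A" unfolding A_def using finite_cube by blast
  have lenA: "length x = n" if "x \<in> A" for x using that aed unfolding A_def AED_code_def words_def by auto
  have inj: "inj_on (\<lambda>(x,j). tr a x j) S"
  proof (rule inj_onI, clarify)
    fix x j x' j' assume s: "(x,j) \<in> S" "(x',j') \<in> S" and eq: "tr a x j = tr a x' j'"
    have l: "length x = n" "length x' = n" using s lenA unfolding S_def by auto
    have xC: "x \<in> C" "x' \<in> C" and jr: "0 \<le> j" "j \<le> t" "0 \<le> j'" "j' \<le> t"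
      using s unfolding S_def A_def by auto
    have e: "\<forall>c<n. x!c + sv a j c = x'!c + sv a j' c"
    proof (intro allI impI)
      fix c assume "c < n"
      thus "x!c + sv a j c = x'!c + sv a j' c" using arg_cong[OF eq, of "\<lambda>l. l!c"] l by simp
    qed
    show "x = x' \<and> j = j'"
    proof (cases "j = j'")
      case True
      hence "x = x'" using e l by (intro nth_equalityI) auto
      thus ?thesis using True by simp
    next
      case False
      hence "j < j' \<or> j' < j" by linarith
      thus ?thesis
      proof
        assume "j < j'"
        show ?thesis using noclash[OF aed a th hn xC jr(1) \<open>j < j'\<close> jr(4) l e] ..
      next
        assume "j' < j"
        have e': "\<forall>c<n. x'!c + sv a j' c = x!c + sv a j c" using e by simp
        show ?thesis using noclash[OF aed a th hn xC(2,1) jr(3) \<open>j' < j\<close> jr(2) l(2,1) e'] ..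
      qed
    qed
  qed
  have sub: "(\<lambda>(x,j). tr a x j) ` S \<subseteq> cube n (k + nat t)"
  proof clarify
    fix x j assume s: "(x,j) \<in> S"
    have l: "length x = n" using s lenA unfolding S_def by auto
    have xc: "\<forall>c<n. - int k \<le> x!c \<and> x!c \<le> int k" using s unfolding S_def A_def cube_def by auto
    have "\<forall>c<n. 0 \<le> sv a j c \<and> sv a j c \<le> a" unfolding sv_def using a by auto
    thus "tr a x j \<in> cube n (k + nat t)" using l xc at a unfolding cube_def words_def
      by (auto simp: algebra_simps) (smt (verit))+
  qed
  have cS: "card S = card A * (nat t + 1)"
  proof -
    have "nat (t + 1) = nat t + 1" using at a by simp
    thus ?thesis using at a by (simp add: S_def card_cartesian_product)
  qed
  have "card A * (nat t + 1) = card ((\<lambda>(x,j). tr a x j) ` S)" using card_image[OF inj] cS by simp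
  also have "\<dots> \<le> card (cube n (k + nat t))" using sub finite_cube by (rule card_mono[rotated])
  also have "\<dots> = (2*(k + nat t)+1)^n" by (rule card_cube)
  finally show ?thesis unfolding A_def S_def .
qed

lemma inv_lim: "(\<lambda>k. 1 / real (2*k+1)) \<longlonglongrightarrow> 0"
proof (rule tendsto_sandwich[of "\<lambda>_. 0" _ _ "\<lambda>k. inverse (real (Suc k))"])
  show "\<forall>\<^sub>F k in sequentially. (0::real) \<le> 1 / real (2*k+1)" by simp
  show "\<forall>\<^sub>F k in sequentially. 1 / real (2*k+1) \<le> inverse (real (Suc k))"
    by (intro always_eventually allI) (simp add: field_simps)
  show "(\<lambda>_. 0::real) \<longlonglongrightarrow> 0" by simp
  show "(\<lambda>k. inverse (real (Suc k))) \<longlonglongrightarrow> 0" by (rule LIMSEQ_inverse_real_of_nat)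
qed

lemma sumcode_density:
  assumes "t > 0" "n > 0"
  shows "has_density n (sum_code n t) (1 / real_of_int (t + 1))"
proof -
  obtain n' where n: "n = Suc n'" using assms by (cases n) auto
  have lo: "(\<lambda>k. 1 / real_of_int (t+1) - 1 / real (2*k+1)) \<longlonglongrightarrow> 1 / real_of_int (t+1) - 0"
    by (intro tendsto_diff tendsto_const inv_lim)
  have hi: "(\<lambda>k. 1 / real_of_int (t+1) + 1 / real (2*k+1)) \<longlonglongrightarrow> 1 / real_of_int (t+1) + 0"
    by (intro tendsto_add tendsto_const inv_lim)
  have lo': "(\<lambda>k. 1 / real_of_int (t+1) - 1 / real (2*k+1)) \<longlonglongrightarrow> 1 / real_of_int (t+1)"
    using lo by simp
  have hi': "(\<lambda>k. 1 / real_of_int (t+1) + 1 / real (2*k+1)) \<longlonglongrightarrow> 1 / real_of_int (t+1)"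
    using hi by simp
  have e1: "\<forall>\<^sub>F k in sequentially. 1 / real_of_int (t+1) - 1 / real (2*k+1) \<le> density_ratio (Suc n') (sum_code (Suc n') t) k"
    using ratio_bounds[OF assms(1)] by (intro always_eventually allI) blast
  have e2: "\<forall>\<^sub>F k in sequentially. density_ratio (Suc n') (sum_code (Suc n') t) k \<le> 1 / real_of_int (t+1) + 1 / real (2*k+1)"
    using ratio_bounds[OF assms(1)] by (intro always_eventually allI) blast
  show ?thesis unfolding has_density_def n
    by (rule tendsto_sandwich[OF e1 e2 lo' hi'])
qed

lemma upper_bound:
  assumes aed: "AED_code n a h t C" and a: "a > 0" and th: "t \<le> a * int h" and hn: "h \<le> n"
    and at: "a \<le> t"
  shows "upper_density n C \<le> ereal (1 / real_of_int (t + 1))"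
proof -
  define T where "T = nat t"
  have tT: "real_of_int t = real T" "real_of_int (t+1) = real T + 1" using a at unfolding T_def by auto
  define g where "g = (\<lambda>k. (1 / (real T + 1)) * (real (2*(k+T)+1) / real (2*k+1)) ^ n)"
  have le: "density_ratio n C k \<le> g k" for k
  proof -
    have c: "real (card (C \<inter> cube n k)) * (real T + 1) \<le> real (2*(k+T)+1) ^ n"
    proof -
      have "real (card (C \<inter> cube n k) * (T + 1)) \<le> real ((2*(k+T)+1)^n)"
        using upper_card[OF assms, of k] unfolding T_def[symmetric] by (simp only: of_nat_le_iff)
      thus ?thesis by (simp add: algebra_simps)
    qed
    have p: "real (2*k+1) ^ n > 0" by simp
    have gk: "g k = (real (2*(k+T)+1) ^ n / (real T + 1)) / real (2*k+1) ^ n"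
      by (simp add: g_def power_divide)
    have T1: "real T + 1 > 0" by simp
    have "real (card (C \<inter> cube n k)) \<le> real (2*(k+T)+1) ^ n / (real T + 1)"
      using c T1 by (simp add: pos_le_divide_eq)
    hence "real (card (C \<inter> cube n k)) / real (2*k+1) ^ n \<le> (real (2*(k+T)+1) ^ n / (real T + 1)) / real (2*k+1) ^ n"
      by (rule divide_right_mono) simp
    thus ?thesis unfolding density_ratio_def gk .
  qed
  have q: "(\<lambda>k. real (2*(k+T)+1) / real (2*k+1)) \<longlonglongrightarrow> 1 + 2 * real T * 0"
  proof -
    have "(\<lambda>k. 1 + 2 * real T * (1 / real (2*k+1))) \<longlonglongrightarrow> 1 + 2 * real T * 0"
      by (intro tendsto_add tendsto_mult tendsto_const inv_lim)
    moreover have "real (2*(k+T)+1) / real (2*k+1) = 1 + 2 * real T * (1 / real (2*k+1))" for k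
      by (simp add: field_simps)
    ultimately show ?thesis by simp
  qed
  have "g \<longlonglongrightarrow> (1 / (real T + 1)) * 1 ^ n"
    unfolding g_def using q by (intro tendsto_mult tendsto_const tendsto_power) simp
  hence gl: "(\<lambda>k. ereal (g k)) \<longlonglongrightarrow> ereal (1 / (real T + 1))" by (simp add: lim_ereal)
  have "upper_density n C \<le> limsup (\<lambda>k. ereal (g k))"
    unfolding upper_density_def using le by (intro Limsup_mono always_eventually) auto
  also have "\<dots> = ereal (1 / (real T + 1))" by (rule lim_imp_Limsup[OF _ gl]) simp
  finally show ?thesis using tT by simp
qed

theorem theorem2:
  fixes n h :: nat and a t :: int
  assumes "n > 0" "h > 0" "a > 0" "t > 0"
    and "h \<le> n" "a \<le> t" "t \<le> a * int h"
  shows "AED_code n a h t (sum_code n t)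
    \<and> has_density n (sum_code n t) (1 / real_of_int (t + 1))
    \<and> (\<forall>C. AED_code n a h t C \<longrightarrow> upper_density n C \<le> ereal (1 / real_of_int (t + 1)))"
  using sumcode_AED[OF assms(4)] sumcode_density[OF assms(4,1)] upper_bound assms by blast

end
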